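(* Let $s\in[0,1)$, let $\Omega\subset\mathbb{R}^N$ be a bounded open Lipschitz set, let $V,f\in L^\infty(\Omega)$, and let $u\in\mathbb{H}^s(\Omega)$ be a weak subsolution of $\mathcal{D}^s_\Omega u+V(x)u=f$ in $\Omega$, i.e. $$\mathcal{E}_s(u,\phi)+\int_\Omega V u\phi\,dx\le\int_\Omega f\phi\,dx\qquad\text{for all }\phi\in\mathbb{H}^s(\Omega),\ \phi\ge0.$$ Then there exists a constant $c_0>0$ depending only on $N$, $\Omega$, $\|V\|_{L^\infty(\Omega)}$, $\|f\|_{L^\infty(\Omega)}$ and $\|u^+\|_{L^2(\Omega)}$, and independent of $s$, such that $u\le c_0$ in $\Omega$.
   Context: A bounded open set $\Omega\subset\mathbb{R}^N$ is a Lipschitz set if each boundary point has a neighborhood in which $\partial\Omega$ is, after rotation, the graph of a Lipschitz function. $\mathbb{H}^s(\Omega)=\{u\in L^2(\Omega):\int_\Omega\int_\Omega\frac{(u(x)-u(y))^2}{|x-y|^{N+2s}}dxdy<\infty\}$, $\mathcal{E}_s(u,v)=\frac12\int_\Omega\int_\Omega\frac{(u(x)-u(y))(v(x)-v(y))}{|x-y|^{N+2s}}dxdy$. $u^+=\max\{u,0\}$. *)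

theory Defs
  imports "HOL-Analysis.Analysis" "HOL-Probability.Essential_Supremum"
begin

text \<open>Lipschitz open set: around every boundary point, after a rotation (encoded by a
unit direction e playing the role of the last coordinate axis), Omega is locally the
region strictly below the graph of a Lipschitz function defined on the hyperplane
orthogonal to e.\<close>
definition lipschitz_set :: "'a::euclidean_space set \<Rightarrow> bool" where
  "lipschitz_set \<Omega> \<longleftrightarrow> open \<Omega> \<and> bounded \<Omega> \<and>
     (\<forall>p\<in>frontier \<Omega>. \<exists>U e g L. open U \<and> p \<in> U \<and> norm e = 1 \<and>
        L-lipschitz_on {y. y \<bullet> e = 0} g \<and>
        \<Omega> \<inter> U = {x\<in>U. x \<bullet> e < g (x - (x \<bullet> e) *\<^sub>R e)} \<and>
        frontier \<Omega> \<inter> U = {x\<in>U. x \<bullet> e = g (x - (x \<bullet> e) *\<^sub>R e)})"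

definition Linf :: "'a::euclidean_space set \<Rightarrow> ('a \<Rightarrow> real) \<Rightarrow> bool" where
  "Linf \<Omega> V \<longleftrightarrow> V \<in> borel_measurable (lebesgue_on \<Omega>) \<and>
      esssup (lebesgue_on \<Omega>) (\<lambda>x. ereal \<bar>V x\<bar>) < \<infinity>"

definition Linf_norm :: "'a::euclidean_space set \<Rightarrow> ('a \<Rightarrow> real) \<Rightarrow> real" where
  "Linf_norm \<Omega> V = real_of_ereal (esssup (lebesgue_on \<Omega>) (\<lambda>x. ereal \<bar>V x\<bar>))"

definition L2_norm_on :: "'a::euclidean_space set \<Rightarrow> ('a \<Rightarrow> real) \<Rightarrow> real" where
  "L2_norm_on \<Omega> u = sqrt (integral\<^sup>L (lebesgue_on \<Omega>) (\<lambda>x. (u x)\<^sup>2))"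

definition frac_kernel :: "real \<Rightarrow> 'a::euclidean_space \<Rightarrow> 'a \<Rightarrow> real" where
  "frac_kernel s x y = 1 / (dist x y powr (real DIM('a) + 2 * s))"

definition Hs :: "real \<Rightarrow> 'a::euclidean_space set \<Rightarrow> ('a \<Rightarrow> real) set" where
  "Hs s \<Omega> = {u. u \<in> borel_measurable (lebesgue_on \<Omega>) \<and>
      integrable (lebesgue_on \<Omega>) (\<lambda>x. (u x)\<^sup>2) \<and>
      (\<integral>\<^sup>+ x. \<integral>\<^sup>+ y. ennreal ((u x - u y)\<^sup>2 * frac_kernel s x y)
          \<partial>lebesgue_on \<Omega> \<partial>lebesgue_on \<Omega>) < \<infinity>}"

definition Es :: "real \<Rightarrow> 'a::euclidean_space set \<Rightarrow> ('a \<Rightarrow> real) \<Rightarrow> ('a \<Rightarrow> real) \<Rightarrow> real" where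
  "Es s \<Omega> u v = 1/2 * integral\<^sup>L (lebesgue_on \<Omega> \<Otimes>\<^sub>M lebesgue_on \<Omega>)
      (\<lambda>(x,y). (u x - u y) * (v x - v y) * frac_kernel s x y)"

definition weak_subsolution ::
  "real \<Rightarrow> 'a::euclidean_space set \<Rightarrow> ('a \<Rightarrow> real) \<Rightarrow> ('a \<Rightarrow> real) \<Rightarrow> ('a \<Rightarrow> real) \<Rightarrow> bool" where
  "weak_subsolution s \<Omega> V f u \<longleftrightarrow> u \<in> Hs s \<Omega> \<and>
     (\<forall>\<phi>\<in>Hs s \<Omega>. (AE x in lebesgue_on \<Omega>. 0 \<le> \<phi> x) \<longrightarrow>
        Es s \<Omega> u \<phi> + integral\<^sup>L (lebesgue_on \<Omega>) (\<lambda>x. V x * u x * \<phi> x)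
          \<le> integral\<^sup>L (lebesgue_on \<Omega>) (\<lambda>x. f x * \<phi> x))"

end

theory Submission
  imports Defs
begin


lemma annulus_ball:
  fixes x e :: "'a::euclidean_space"
  assumes "norm e = 1" "0 < r" "0 < \<rho>" "\<rho> \<le> r/4" "y \<in> ball (x - (r/2) *\<^sub>R e) \<rho>"
  shows "r/4 < dist x y \<and> dist x y < r"
proof -
  have d: "dist x (x - (r/2) *\<^sub>R e) = r/2" using assms by (simp add: dist_norm)
  have "dist (x - (r/2) *\<^sub>R e) y < \<rho>" using assms(5) by simp
  then show ?thesis using d dist_triangle[of x y "x - (r/2) *\<^sub>R e"] dist_triangle[of x "x - (r/2) *\<^sub>R e" y]
    assms by (simp add: dist_commute)
qed

lemma proj_norm_le:
  fixes q e :: "'a::euclidean_space"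
  assumes "norm e = 1"
  shows "norm (q - (q \<bullet> e) *\<^sub>R e) \<le> norm q"
proof -
  have ee: "e \<bullet> e = 1" using assms by (simp add: norm_eq_1)
  have "(norm (q - (q \<bullet> e) *\<^sub>R e))\<^sup>2 = q \<bullet> q - (q \<bullet> e)\<^sup>2"
    unfolding power2_norm_eq_inner by (simp add: inner_diff_left inner_diff_right ee inner_commute power2_eq_square)
  also have "\<dots> \<le> (norm q)\<^sup>2" by (simp add: power2_norm_eq_inner)
  finally show ?thesis by (simp add: power2_le_iff_abs_le)
qed

lemma local_cone:
  fixes \<Omega> :: "'a::euclidean_space set"
  assumes "lipschitz_set \<Omega>" "p \<in> frontier \<Omega>"
  shows "\<exists>\<epsilon>>0. \<exists>L\<ge>0. \<forall>x\<in>\<Omega>. dist p x < \<epsilon> \<longrightarrow> (\<forall>r. 0 < r \<and> r \<le> \<epsilon> \<longrightarrow>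
     (\<exists>z. ball z (r/(4*(1+L))) \<subseteq> \<Omega> \<and> (\<forall>y\<in>ball z (r/(4*(1+L))). r/4 < dist x y \<and> dist x y < r)))"
proof -
  obtain U e g L where U: "open U" "p \<in> U" and e: "norm e = 1" and Lg: "L-lipschitz_on {y. y \<bullet> e = 0} g"
    and OU: "\<Omega> \<inter> U = {x\<in>U. x \<bullet> e < g (x - (x \<bullet> e) *\<^sub>R e)}"
    using assms unfolding lipschitz_set_def by blast
  obtain \<delta> where \<delta>: "\<delta> > 0" "ball p \<delta> \<subseteq> U" using U open_contains_ball by blast
  have ee: "e \<bullet> e = 1" using e by (simp add: norm_eq_1)
  define L' where "L' = \<bar>L\<bar>"
  have hyp: "(w - (w \<bullet> e) *\<^sub>R e) \<bullet> e = 0" for w by (simp add: inner_diff_left ee)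
  have lip: "g a \<ge> g b - L' * norm (a - b)" if "a \<bullet> e = 0" "b \<bullet> e = 0" for a b
  proof -
    have "dist (g a) (g b) \<le> L * dist a b" using lipschitz_onD[OF Lg] that by auto
    also have "\<dots> \<le> L' * dist a b" unfolding L'_def by (simp add: mult_right_mono)
    finally show ?thesis by (simp add: dist_real_def dist_norm)
  qed
  have "\<delta>/2 > 0" "L' \<ge> 0" using \<delta> by (auto simp: L'_def)
  moreover have "\<forall>x\<in>\<Omega>. dist p x < \<delta>/2 \<longrightarrow> (\<forall>r. 0 < r \<and> r \<le> \<delta>/2 \<longrightarrow>
     (\<exists>z. ball z (r/(4*(1+L'))) \<subseteq> \<Omega> \<and> (\<forall>y\<in>ball z (r/(4*(1+L'))). r/4 < dist x y \<and> dist x y < r)))"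
  proof (intro allI impI ballI)
    fix x r assume x: "x \<in> \<Omega>" "dist p x < \<delta>/2" and r: "0 < r \<and> r \<le> \<delta>/2"
    define z where "z = x - (r/2) *\<^sub>R e"
    define \<rho> where "\<rho> = r/(4*(1+L'))"
    have L'0: "L' \<ge> 0" by (simp add: L'_def)
    have \<rho>0: "0 < \<rho>" "\<rho> \<le> r/4" using r L'0 by (auto simp: \<rho>_def field_simps)
    have ann: "r/4 < dist x y \<and> dist x y < r" if "y \<in> ball z \<rho>" for y
      using annulus_ball[OF e _ \<rho>0(1) \<rho>0(2)] r that unfolding z_def by auto
    have xU: "x \<in> U" using x \<delta> by (auto simp: dist_commute)
    have xe: "x \<bullet> e < g (x - (x \<bullet> e) *\<^sub>R e)" using OU x xU by blast
    have "ball z \<rho> \<subseteq> \<Omega>"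
    proof
      fix y assume y: "y \<in> ball z \<rho>"
      have "dist p y < \<delta>" using ann[OF y] x r dist_triangle[of p y x] by (simp add: dist_commute) 
      then have yU: "y \<in> U" using \<delta> by auto
      define q where "q = y - z"
      have nq: "norm q < \<rho>" using y by (simp add: q_def dist_norm norm_minus_commute)
      have yq: "y = x - (r/2) *\<^sub>R e + q" by (simp add: q_def z_def)
      have pd: "(y - (y \<bullet> e) *\<^sub>R e) - (x - (x \<bullet> e) *\<^sub>R e) = q - (q \<bullet> e) *\<^sub>R e"
        by (simp add: yq inner_add_left inner_diff_left ee algebra_simps)
      have "norm (q - (q \<bullet> e) *\<^sub>R e) \<le> norm q" by (rule proj_norm_le[OF e])
      then have "L' * norm (q - (q \<bullet> e) *\<^sub>R e) \<le> L' * norm q" using L'0 by (rule mult_left_mono)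
      moreover have "g (y - (y \<bullet> e) *\<^sub>R e) \<ge> g (x - (x \<bullet> e) *\<^sub>R e) - L' * norm (q - (q \<bullet> e) *\<^sub>R e)"
        using lip[OF hyp[of y] hyp[of x]] unfolding pd .
      ultimately have "g (y - (y \<bullet> e) *\<^sub>R e) \<ge> g (x - (x \<bullet> e) *\<^sub>R e) - L' * norm q" by linarith
      moreover have "y \<bullet> e = x \<bullet> e - r/2 + q \<bullet> e" by (simp add: yq inner_add_left inner_diff_left ee)
      moreover have "q \<bullet> e \<le> norm q" using Cauchy_Schwarz_ineq2[of q e] e by simp
      moreover have "(1 + L') * norm q \<le> (1+L') * \<rho>" using nq L'0 by (intro mult_left_mono) auto
      then have "norm q + L' * norm q \<le> \<rho> + L' * \<rho>" by (simp add: algebra_simps)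
      moreover have "\<rho> + L' * \<rho> = r/4"
      proof -
        have h: "4*(1+L') \<noteq> 0" using L'0 by simp
        have "4*(1+L') * \<rho> = r" unfolding \<rho>_def using h by simp
        then show ?thesis by (simp add: algebra_simps)
      qed
      ultimately have "y \<bullet> e < g (y - (y \<bullet> e) *\<^sub>R e)" using xe r nq by linarith
      then show "y \<in> \<Omega>" using OU yU by blast
    qed
    then show "\<exists>z. ball z (r/(4*(1+L'))) \<subseteq> \<Omega> \<and> (\<forall>y\<in>ball z (r/(4*(1+L'))). r/4 < dist x y \<and> dist x y < r)"
      using ann unfolding \<rho>_def by blast
  qed
  ultimately show ?thesis by blast
qed



lemma geom:
  fixes \<Omega> :: "'a::euclidean_space set"
  assumes "lipschitz_set \<Omega>"
  shows "\<exists>r0 c. 0 < r0 \<and> r0 \<le> 1 \<and> 0 < c \<and> c \<le> 1/4 \<and> (\<forall>x\<in>\<Omega>. \<forall>r. 0 < r \<and> r \<le> r0 \<longrightarrow>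
     (\<exists>z. ball z (c*r) \<subseteq> \<Omega> \<and> (\<forall>y\<in>ball z (c*r). r/4 < dist x y \<and> dist x y < r)))"
proof -
  define P where "P = (\<lambda>p \<epsilon> L. \<forall>x\<in>\<Omega>. dist p x < \<epsilon> \<longrightarrow> (\<forall>r. 0 < r \<and> r \<le> \<epsilon> \<longrightarrow>
     (\<exists>z. ball z (r/(4*(1+L))) \<subseteq> \<Omega> \<and> (\<forall>y\<in>ball z (r/(4*(1+L))). r/4 < dist x y \<and> dist x y < r))))"
  have "\<forall>p\<in>frontier \<Omega>. \<exists>\<epsilon>L. fst \<epsilon>L > 0 \<and> snd \<epsilon>L \<ge> 0 \<and> P p (fst \<epsilon>L) (snd \<epsilon>L)"
  proof
    fix p assume "p \<in> frontier \<Omega>"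
    from local_cone[OF assms this] obtain \<epsilon> L where "\<epsilon> > 0" "L \<ge> 0" "P p \<epsilon> L"
      unfolding P_def by blast
    then show "\<exists>\<epsilon>L. fst \<epsilon>L > 0 \<and> snd \<epsilon>L \<ge> 0 \<and> P p (fst \<epsilon>L) (snd \<epsilon>L)"
      by (intro exI[of _ "(\<epsilon>, L)"]) auto
  qed
  then obtain EL where EL: "\<And>p. p \<in> frontier \<Omega> \<Longrightarrow> fst (EL p) > 0 \<and> snd (EL p) \<ge> 0 \<and> P p (fst (EL p)) (snd (EL p))"
    by metis
  define E where "E p = fst (EL p)" for p
  define Lf where "Lf p = snd (EL p)" for p
  have EL': "E p > 0" "Lf p \<ge> 0" "P p (E p) (Lf p)" if "p \<in> frontier \<Omega>" for p
    using EL[OF that] unfolding E_def Lf_def by auto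
  have bdd: "bounded \<Omega>" using assms unfolding lipschitz_set_def by blast
  have cpt: "compact (frontier \<Omega>)" using bdd by blast
  have cov: "frontier \<Omega> \<subseteq> (\<Union>p\<in>frontier \<Omega>. ball p (E p/2))"
    using EL'(1) by force
  obtain T where T: "T \<subseteq> frontier \<Omega>" "finite T" "frontier \<Omega> \<subseteq> (\<Union>p\<in>T. ball p (E p/2))"
    using compactE_image[OF cpt _ cov] by blast
  define \<eta> where "\<eta> = Min (insert 1 ((\<lambda>p. E p/2) ` T))"
  define Lm where "Lm = Max (insert 0 (Lf ` T))"
  have \<eta>pos: "\<eta> > 0" unfolding \<eta>_def using T EL'(1) by (subst Min_gr_iff) auto
  have \<eta>le1: "\<eta> \<le> 1" unfolding \<eta>_def using T by simp
  have \<eta>le: "\<eta> \<le> E p/2" if "p \<in> T" for p unfolding \<eta>_def using T that by (intro Min_le) auto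
  have Lm0: "Lm \<ge> 0" unfolding Lm_def using T by simp
  have Lmge: "Lf p \<le> Lm" if "p \<in> T" for p unfolding Lm_def using T that by simp
  define c where "c = 1/(4*(1+Lm))"
  have c0: "c > 0" "c \<le> 1/4" using Lm0 by (auto simp: c_def field_simps)
  obtain b :: 'a where b: "norm b = 1" using nonempty_Basis norm_Basis by blast
  have main: "\<exists>z. ball z (c*r) \<subseteq> \<Omega> \<and> (\<forall>y\<in>ball z (c*r). r/4 < dist x y \<and> dist x y < r)"
    if x: "x \<in> \<Omega>" and r: "0 < r" "r \<le> \<eta>" for x r
  proof (cases "ball x \<eta> \<subseteq> \<Omega>")
    case True
    have cr: "0 < c*r" "c*r \<le> r/4" using c0 r by auto
    have ann: "r/4 < dist x y \<and> dist x y < r" if "y \<in> ball (x - (r/2) *\<^sub>R b) (c*r)" for y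
      using annulus_ball[OF b r(1) cr that] .
    have "ball (x - (r/2) *\<^sub>R b) (c*r) \<subseteq> \<Omega>"
    proof
      fix y assume "y \<in> ball (x - (r/2) *\<^sub>R b) (c*r)"
      then have "dist x y < \<eta>" using ann r by force
      then show "y \<in> \<Omega>" using True by auto
    qed
    then show ?thesis using ann by blast
  next
    case False
    have "ball x \<eta> \<inter> frontier \<Omega> \<noteq> {}"
    proof (rule connected_Int_frontier)
      show "ball x \<eta> \<inter> \<Omega> \<noteq> {}" using x \<eta>pos by (metis IntI centre_in_ball empty_iff)
      show "ball x \<eta> - \<Omega> \<noteq> {}" using False by blast
    qed simp
    then obtain q where q: "q \<in> ball x \<eta>" "q \<in> frontier \<Omega>" by blast
    then obtain p where p: "p \<in> T" "q \<in> ball p (E p/2)" using T by blast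
    have pf: "p \<in> frontier \<Omega>" using p T by blast
    have "dist p x < E p" using q p \<eta>le[OF p(1)] dist_triangle[of p x q] by (simp add: dist_commute)
    moreover have "r \<le> E p" using r \<eta>le[OF p(1)] EL'(1)[OF pf] by simp
    ultimately obtain z where z: "ball z (r/(4*(1+Lf p))) \<subseteq> \<Omega>"
       "\<forall>y\<in>ball z (r/(4*(1+Lf p))). r/4 < dist x y \<and> dist x y < r"
      using EL'(3)[OF pf] x r unfolding P_def by blast
    have "c*r \<le> r/(4*(1+Lf p))"
      unfolding c_def using Lmge[OF p(1)] EL'(2)[OF pf] r by (simp add: field_simps)
    then have "ball z (c*r) \<subseteq> ball z (r/(4*(1+Lf p)))" by (rule subset_ball)
    then show ?thesis using z by blast
  qed
  show ?thesis
    by (rule exI[of _ \<eta>], rule exI[of _ c]) (use \<eta>pos \<eta>le1 c0 main in auto)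
qed



definition kF :: "real \<Rightarrow> real \<Rightarrow> 'a::euclidean_space \<Rightarrow> 'a \<Rightarrow> real" where
  "kF s \<epsilon> x y = (if \<epsilon> \<le> dist x y then frac_kernel s x y else 0)"

lemma frac_kernel_nonneg: "frac_kernel s x y \<ge> 0"
  by (simp add: frac_kernel_def)

lemma kF_nonneg: "kF s \<epsilon> x y \<ge> 0"
  by (simp add: kF_def frac_kernel_nonneg)

lemma kernel_lower:
  fixes x y :: "'a::euclidean_space"
  assumes "0 \<le> s" "0 < dist x y" "dist x y \<le> r" "r \<le> 1"
  shows "1 / r ^ DIM('a) \<le> frac_kernel s x y"
proof -
  let ?d = "dist x y"
  have "?d powr (real DIM('a) + 2 * s) \<le> ?d powr (real DIM('a))"
    using assms by (intro powr_mono') auto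
  also have "\<dots> = ?d ^ DIM('a)" using assms by (simp add: powr_realpow)
  also have "\<dots> \<le> r ^ DIM('a)" using assms by (intro power_mono) auto
  finally have le: "?d powr (real DIM('a) + 2 * s) \<le> r ^ DIM('a)" .
  have pos: "?d powr (real DIM('a) + 2 * s) > 0" using assms by simp
  show ?thesis unfolding frac_kernel_def using le pos by (simp add: frac_le)
qed

lemma kernel_upper:
  fixes x y :: "'a::euclidean_space"
  assumes "0 \<le> s" "s < 1" "0 < \<epsilon>" "\<epsilon> \<le> 1" "\<epsilon> \<le> dist x y"
  shows "frac_kernel s x y \<le> 1 / \<epsilon> ^ (DIM('a) + 2)"
proof -
  let ?d = "dist x y"
  have "\<epsilon> ^ (DIM('a) + 2) = \<epsilon> powr (real DIM('a) + 2)" using powr_realpow[of \<epsilon> "DIM('a)+2"] assms by (simp add: add.commute)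
  also have "\<dots> \<le> \<epsilon> powr (real DIM('a) + 2 * s)"
    using assms by (intro powr_mono') auto
  also have "\<dots> \<le> ?d powr (real DIM('a) + 2 * s)"
    using assms by (intro powr_mono2) auto
  finally have le: "\<epsilon> ^ (DIM('a) + 2) \<le> ?d powr (real DIM('a) + 2 * s)" .
  have pos: "\<epsilon> ^ (DIM('a) + 2) > 0" using assms by simp
  show ?thesis unfolding frac_kernel_def using le pos by (simp add: frac_le)
qed

lemma kF_upper:
  fixes x y :: "'a::euclidean_space"
  assumes "0 \<le> s" "s < 1" "0 < \<epsilon>" "\<epsilon> \<le> 1"
  shows "kF s \<epsilon> x y \<le> 1 / \<epsilon> ^ (DIM('a) + 2)"
  using kernel_upper[OF assms, of x y] assms by (auto simp: kF_def)

lemma far_lower: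
  fixes \<Omega> :: "'a::euclidean_space set"
  assumes geo: "\<forall>x\<in>\<Omega>. \<forall>r. 0 < r \<and> r \<le> r0 \<longrightarrow>
     (\<exists>z. ball z (c*r) \<subseteq> \<Omega> \<and> (\<forall>y\<in>ball z (c*r). r/4 < dist x y \<and> dist x y < r))"
    and r0: "0 < r0" "r0 \<le> 1" and c: "0 < c" and s: "0 \<le> s" and x: "x \<in> \<Omega>" and op: "open \<Omega>"
  shows "ennreal (real J * (unit_ball_vol DIM('a) * c ^ DIM('a)))
     \<le> (\<integral>\<^sup>+ y. ennreal (kF s (r0 * (1/4)^J) x y) \<partial>lebesgue_on \<Omega>)"
proof -
  define R where "R j = r0 * (1/4::real)^j" for j :: nat
  have Rpos: "R j > 0" for j using r0 by (simp add: R_def)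
  have Rle1: "R j \<le> 1" for j
  proof -
    have "R j \<le> r0 * 1" unfolding R_def using r0 by (intro mult_left_mono) (auto simp: power_le_one)
    then show ?thesis using r0 by simp
  qed
  have Rle: "R j \<le> r0" for j using Rle1[of j] unfolding R_def using r0
    by (intro mult_left_le) (auto simp: power_le_one)
  have Rsuc: "R (Suc j) = R j / 4" for j by (simp add: R_def)
  have Rmono: "i \<le> j \<Longrightarrow> R j \<le> R i" for i j
    unfolding R_def using r0 by (intro mult_left_mono power_decreasing) auto
  have "\<forall>j. \<exists>z. ball z (c * R j) \<subseteq> \<Omega> \<and> (\<forall>y\<in>ball z (c * R j). R j/4 < dist x y \<and> dist x y < R j)"
    using geo x Rpos Rle by blast
  then obtain Z where Z: "\<And>j. ball (Z j) (c * R j) \<subseteq> \<Omega>"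
     "\<And>j y. y \<in> ball (Z j) (c * R j) \<Longrightarrow> R j/4 < dist x y \<and> dist x y < R j"
    by metis
  define B where "B j = ball (Z j) (c * R j)" for j
  have disj: "y \<notin> B j" if "y \<in> B i" "i \<noteq> j" for i j y
  proof
    assume "y \<in> B j"
    then have a: "R j/4 < dist x y" "dist x y < R j" using Z(2) unfolding B_def by auto
    have b: "R i/4 < dist x y" "dist x y < R i" using Z(2) that unfolding B_def by auto
    show False
    proof (cases "i < j")
      case True
      then have "R j \<le> R (Suc i)" by (intro Rmono) auto
      then show False using a b Rsuc[of i] by simp
    next
      case False
      then have "j < i" using that by simp
      then have "R i \<le> R (Suc j)" by (intro Rmono) auto
      then show False using a b Rsuc[of j] by simp
    qed
  qed
  have sets_O: "\<Omega> \<in> sets lebesgue" using op by auto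
  have Bsets: "B j \<in> sets (lebesgue_on \<Omega>)" for j
    using Z(1) sets_O unfolding B_def by (subst sets_restrict_space_iff) auto
  have Bmeas: "emeasure (lebesgue_on \<Omega>) (B j) = ennreal (unit_ball_vol DIM('a) * (c * R j) ^ DIM('a))" for j
  proof -
    have "emeasure (lebesgue_on \<Omega>) (B j) = emeasure lebesgue (B j)"
      using Z(1) sets_O unfolding B_def by (intro emeasure_restrict_space) auto
    also have "\<dots> = emeasure lborel (B j)" unfolding B_def by simp
    also have "\<dots> = ennreal (unit_ball_vol DIM('a) * (c * R j) ^ DIM('a))"
      unfolding B_def using c Rpos[of j] by (intro emeasure_ball) simp
    finally show ?thesis .
  qed
  have pt: "(\<Sum>j<J. ennreal (1 / R j ^ DIM('a)) * indicator (B j) y) \<le> ennreal (kF s (r0 * (1/4)^J) x y)" for y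
  proof (cases "\<exists>i<J. y \<in> B i")
    case True
    then obtain i where i: "i < J" "y \<in> B i" by blast
    have "(\<Sum>j<J. ennreal (1 / R j ^ DIM('a)) * indicator (B j) y)
        = ennreal (1 / R i ^ DIM('a)) * indicator (B i) y + (\<Sum>j\<in>{..<J}-{i}. ennreal (1 / R j ^ DIM('a)) * indicator (B j) y)"
      using i by (intro sum.remove) auto
    also have "(\<Sum>j\<in>{..<J}-{i}. ennreal (1 / R j ^ DIM('a)) * indicator (B j) y) = 0"
      using i disj by (intro sum.neutral) auto
    finally have eq: "(\<Sum>j<J. ennreal (1 / R j ^ DIM('a)) * indicator (B j) y) = ennreal (1 / R i ^ DIM('a))"
      using i by simp
    have d: "R i/4 < dist x y" "dist x y < R i" using Z(2) i unfolding B_def by auto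
    have "R J \<le> R (Suc i)" using i by (intro Rmono) auto
    then have "r0 * (1/4)^J \<le> dist x y" using d Rsuc[of i] unfolding R_def by simp
    then have "kF s (r0 * (1/4)^J) x y = frac_kernel s x y" by (simp add: kF_def)
    moreover have "1 / R i ^ DIM('a) \<le> frac_kernel s x y"
      using d Rpos[of i] Rle1[of i] s by (intro kernel_lower) auto
    ultimately show ?thesis unfolding eq by (simp add: ennreal_leI)
  next
    case False
    then have "(\<Sum>j<J. ennreal (1 / R j ^ DIM('a)) * indicator (B j) y) = 0"
      by (intro sum.neutral) auto
    then show ?thesis by simp
  qed
  have "(\<integral>\<^sup>+ y. (\<Sum>j<J. ennreal (1 / R j ^ DIM('a)) * indicator (B j) y) \<partial>lebesgue_on \<Omega>)
      = (\<Sum>j<J. \<integral>\<^sup>+ y. ennreal (1 / R j ^ DIM('a)) * indicator (B j) y \<partial>lebesgue_on \<Omega>)"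
    using Bsets by (intro nn_integral_sum) auto
  also have "\<dots> = (\<Sum>j<J. ennreal (1 / R j ^ DIM('a)) * emeasure (lebesgue_on \<Omega>) (B j))"
    using Bsets by (intro sum.cong refl nn_integral_cmult_indicator) 
  also have "\<dots> = (\<Sum>j<J. ennreal (unit_ball_vol DIM('a) * c ^ DIM('a)))"
  proof (intro sum.cong refl)
    fix j
    have "1 / R j ^ DIM('a) * (unit_ball_vol DIM('a) * (c * R j) ^ DIM('a)) = unit_ball_vol DIM('a) * c ^ DIM('a)"
      using Rpos[of j] by (simp add: power_mult_distrib field_simps)
    then show "ennreal (1 / R j ^ DIM('a)) * emeasure (lebesgue_on \<Omega>) (B j) = ennreal (unit_ball_vol DIM('a) * c ^ DIM('a))"
      unfolding Bmeas using Rpos[of j] c by (simp add: ennreal_mult[symmetric])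
  qed
  also have "\<dots> = ennreal (real J * (unit_ball_vol DIM('a) * c ^ DIM('a)))"
  proof -
    have "0 \<le> unit_ball_vol DIM('a) * c ^ DIM('a)" using c by simp
    then show ?thesis by (simp add: ennreal_of_nat_eq_real_of_nat ennreal_mult)
  qed
  finally have "ennreal (real J * (unit_ball_vol DIM('a) * c ^ DIM('a)))
      = (\<integral>\<^sup>+ y. (\<Sum>j<J. ennreal (1 / R j ^ DIM('a)) * indicator (B j) y) \<partial>lebesgue_on \<Omega>)" by simp
  also have "\<dots> \<le> (\<integral>\<^sup>+ y. ennreal (kF s (r0 * (1/4)^J) x y) \<partial>lebesgue_on \<Omega>)"
    by (intro nn_integral_mono pt)
  finally show ?thesis .
qed



lemma meas_fst_leb[measurable]: "fst \<in> borel_measurable (lebesgue_on \<Omega> \<Otimes>\<^sub>M lebesgue_on \<Omega>)"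
  using measurable_compose[OF measurable_fst id_borel_measurable_lebesgue_on] by (simp add: comp_def)

lemma meas_snd_leb[measurable]: "snd \<in> borel_measurable (lebesgue_on \<Omega> \<Otimes>\<^sub>M lebesgue_on \<Omega>)"
  using measurable_compose[OF measurable_snd id_borel_measurable_lebesgue_on] by (simp add: comp_def)

lemma meas_kernel: "(\<lambda>p. frac_kernel s (fst p) (snd p)) \<in> borel_measurable (lebesgue_on \<Omega> \<Otimes>\<^sub>M lebesgue_on \<Omega>)"
  unfolding frac_kernel_def by measurable

lemma meas_kF: "(\<lambda>p. kF s \<epsilon> (fst p) (snd p)) \<in> borel_measurable (lebesgue_on \<Omega> \<Otimes>\<^sub>M lebesgue_on \<Omega>)"
  unfolding kF_def frac_kernel_def by measurable

lemma nn_swap: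
  assumes P: "pair_sigma_finite M M"
    and g: "(\<lambda>p. g (fst p) (snd p)) \<in> borel_measurable (M \<Otimes>\<^sub>M M)"
  shows "(\<integral>\<^sup>+p. g (snd p) (fst p) \<partial>(M \<Otimes>\<^sub>M M)) = (\<integral>\<^sup>+p. g (fst p) (snd p) \<partial>(M \<Otimes>\<^sub>M M))"
proof -
  interpret P: pair_sigma_finite M M by (rule P)
  have sf: "sigma_finite_measure M" using P unfolding pair_sigma_finite_def by blast
  have g': "(\<lambda>p. g (snd p) (fst p)) \<in> borel_measurable (M \<Otimes>\<^sub>M M)"
    using measurable_pair_swap[OF g] by simp
  have "(\<integral>\<^sup>+p. g (snd p) (fst p) \<partial>(M \<Otimes>\<^sub>M M)) = (\<integral>\<^sup>+x. \<integral>\<^sup>+y. g y x \<partial>M \<partial>M)"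
    using sigma_finite_measure.nn_integral_fst[OF sf g'] by simp
  also have "\<dots> = (\<integral>\<^sup>+p. g (fst p) (snd p) \<partial>(M \<Otimes>\<^sub>M M))"
    using P.nn_integral_snd[OF g] by simp
  finally show ?thesis .
qed



lemma main_bound:
  fixes \<Omega> :: "'a::euclidean_space set" and u :: "'a \<Rightarrow> real"
  assumes op: "open \<Omega>" and bd: "bounded \<Omega>" and s: "0 \<le> s" "s < 1" and e: "0 < \<epsilon>" "\<epsilon> \<le> 1"
    and Hl: "\<forall>x\<in>\<Omega>. ennreal \<Lambda> \<le> (\<integral>\<^sup>+ y. ennreal (kF s \<epsilon> x y) \<partial>lebesgue_on \<Omega>)" and \<Lambda>: "0 \<le> \<Lambda>"
    and u: "u \<in> Hs s \<Omega>" and K: "0 \<le> K"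
    and vdef: "v = (\<lambda>x. max (u x - K) 0)"
  shows "\<Lambda> * (\<integral>x. v x * u x \<partial>lebesgue_on \<Omega>)
     - (1/\<epsilon>^(DIM('a)+2)) * (\<integral>x. max (u x) 0 \<partial>lebesgue_on \<Omega>) * (\<integral>x. v x \<partial>lebesgue_on \<Omega>)
     \<le> Es s \<Omega> u v"
proof -
  define M where "M = lebesgue_on \<Omega>"
  define D :: real where "D = 1/\<epsilon>^(DIM('a)+2)"
  define up where "up = (\<lambda>x. max (u x) 0)"
  have D0: "D \<ge> 0" using e by (simp add: D_def)
  have \<Omega>l: "\<Omega> \<in> lmeasurable" using op bd by (simp add: bounded_set_imp_lmeasurable)
  interpret M: finite_measure M unfolding M_def using finite_measure_lebesgue_on[OF \<Omega>l] .
  have sfM: "sigma_finite_measure M" by (rule M.sigma_finite_measure_axioms)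
  have PM: "pair_sigma_finite M M" unfolding pair_sigma_finite_def using sfM by simp
  interpret P: pair_sigma_finite M M by (rule PM)
  have um[measurable]: "u \<in> borel_measurable M" using u unfolding Hs_def M_def by blast
  have u2: "integrable M (\<lambda>x. (u x)\<^sup>2)" using u unfolding Hs_def M_def by blast
  have uH: "(\<integral>\<^sup>+ x. \<integral>\<^sup>+ y. ennreal ((u x - u y)\<^sup>2 * frac_kernel s x y) \<partial>M \<partial>M) < \<infinity>"
    using u unfolding Hs_def M_def by blast
  have vm[measurable]: "v \<in> borel_measurable M" unfolding vdef by measurable
  have upm[measurable]: "up \<in> borel_measurable M" unfolding up_def by measurable
  have v0: "v x \<ge> 0" for x unfolding vdef by simp
  have vup: "v x \<le> up x" for x unfolding vdef up_def using K by simp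
  have vu0: "0 \<le> v x * u x" for x unfolding vdef using K by (simp add: max_def)
  have vuu: "v x * u x \<le> (u x)\<^sup>2" for x unfolding vdef using K by (simp add: max_def power2_eq_square mult_right_mono)
  have km[measurable]: "(\<lambda>p. frac_kernel s (fst p) (snd p)) \<in> borel_measurable (M \<Otimes>\<^sub>M M)"
    unfolding M_def by (rule meas_kernel)
  have kFm[measurable]: "(\<lambda>p. kF s \<epsilon> (fst p) (snd p)) \<in> borel_measurable (M \<Otimes>\<^sub>M M)"
    unfolding M_def by (rule meas_kF)
  have kFm2[measurable]: "(\<lambda>y. kF s \<epsilon> x y) \<in> borel_measurable M" for x
  proof -
    have idm[measurable]: "(\<lambda>y. y) \<in> borel_measurable M"
      using id_borel_measurable_lebesgue_on unfolding M_def id_def .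
    show ?thesis unfolding kF_def frac_kernel_def by measurable
  qed
  have int1: "integrable M (\<lambda>x. 1::real)" by simp
  have upint: "integrable M up"
  proof (rule Bochner_Integration.integrable_bound[OF Bochner_Integration.integrable_add[OF int1 u2]])
    show "AE x in M. norm (up x) \<le> norm (1 + (u x)\<^sup>2)"
    proof (intro AE_I2)
      fix x
      have h: "0 \<le> (u x - 1/2)\<^sup>2" by simp
      have "(u x - 1/2)\<^sup>2 = (u x)\<^sup>2 - u x + 1/4" by (simp add: power2_eq_square algebra_simps)
      then have "max (u x) 0 \<le> 1 + (u x)\<^sup>2" using h by (simp add: max_def)
      then show "norm (up x) \<le> norm (1 + (u x)\<^sup>2)" unfolding up_def by simp
    qed
  qed simp
  have vint: "integrable M v"
    by (rule Bochner_Integration.integrable_bound[OF upint]) (use v0 vup in \<open>auto simp: up_def intro!: AE_I2\<close>)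
  have vuint: "integrable M (\<lambda>x. v x * u x)"
    by (rule Bochner_Integration.integrable_bound[OF u2]) (auto simp: vu0 vuu intro!: AE_I2)
  define w where "w = (\<lambda>p. (u (fst p) - u (snd p)) * (v (fst p) - v (snd p)) * frac_kernel s (fst p) (snd p))"
  have wm[measurable]: "w \<in> borel_measurable (M \<Otimes>\<^sub>M M)" unfolding w_def by measurable
  have mono_uv: "0 \<le> (u x - u y) * (v x - v y)" for x y
    unfolding vdef by (auto simp: max_def mult_nonneg_nonneg mult_nonpos_nonpos)
  have mono_uv2: "(u x - u y) * (v x - v y) \<le> (u x - u y)\<^sup>2" for x y
  proof -
    have l: "\<bar>v x - v y\<bar> \<le> \<bar>u x - u y\<bar>" unfolding vdef by (auto simp: max_def)
    have "(u x - u y) * (v x - v y) \<le> \<bar>u x - u y\<bar> * \<bar>v x - v y\<bar>" by (metis abs_ge_self abs_mult)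
    also have "\<dots> \<le> \<bar>u x - u y\<bar> * \<bar>u x - u y\<bar>" by (rule mult_left_mono[OF l]) simp
    also have "\<dots> = (u x - u y)\<^sup>2" by (simp add: power2_eq_square)
    finally show ?thesis .
  qed
  have w0: "0 \<le> w p" for p unfolding w_def by (intro mult_nonneg_nonneg mono_uv frac_kernel_nonneg)
  have wle: "w p \<le> (u (fst p) - u (snd p))\<^sup>2 * frac_kernel s (fst p) (snd p)" for p
    unfolding w_def using mono_uv2 frac_kernel_nonneg by (intro mult_right_mono) auto
  have big_m: "(\<lambda>p. ennreal ((u (fst p) - u (snd p))\<^sup>2 * frac_kernel s (fst p) (snd p))) \<in> borel_measurable (M \<Otimes>\<^sub>M M)"
    by measurable
  have "(\<integral>\<^sup>+p. ennreal ((u (fst p) - u (snd p))\<^sup>2 * frac_kernel s (fst p) (snd p)) \<partial>(M \<Otimes>\<^sub>M M))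
      = (\<integral>\<^sup>+ x. \<integral>\<^sup>+ y. ennreal ((u x - u y)\<^sup>2 * frac_kernel s x y) \<partial>M \<partial>M)"
    using sigma_finite_measure.nn_integral_fst[OF sfM big_m] by simp
  then have big_fin: "(\<integral>\<^sup>+p. ennreal ((u (fst p) - u (snd p))\<^sup>2 * frac_kernel s (fst p) (snd p)) \<partial>(M \<Otimes>\<^sub>M M)) < \<infinity>"
    using uH by simp
  have wint: "integrable (M \<Otimes>\<^sub>M M) w"
  proof (rule integrableI_bounded)
    show "w \<in> borel_measurable (M \<Otimes>\<^sub>M M)" by (rule wm)
    have "(\<integral>\<^sup>+p. ennreal (norm (w p)) \<partial>(M \<Otimes>\<^sub>M M))
       \<le> (\<integral>\<^sup>+p. ennreal ((u (fst p) - u (snd p))\<^sup>2 * frac_kernel s (fst p) (snd p)) \<partial>(M \<Otimes>\<^sub>M M))"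
      using w0 wle by (intro nn_integral_mono) (simp add: ennreal_leI)
    then show "(\<integral>\<^sup>+p. ennreal (norm (w p)) \<partial>(M \<Otimes>\<^sub>M M)) < \<infinity>" using big_fin by (rule le_less_trans)
  qed
  have Es_eq: "Es s \<Omega> u v = 1/2 * integral\<^sup>L (M \<Otimes>\<^sub>M M) w"
    unfolding Es_def M_def w_def by (simp add: case_prod_beta')
  have w_nn: "(\<integral>\<^sup>+p. ennreal (w p) \<partial>(M \<Otimes>\<^sub>M M)) = ennreal (integral\<^sup>L (M \<Otimes>\<^sub>M M) w)"
    using wint w0 by (intro nn_integral_eq_integral) auto
  define A where "A = (\<lambda>x y. (u x - u y) * (v x - v y) * kF s \<epsilon> x y)"
  define B where "B = (\<lambda>x y. v x * up y * kF s \<epsilon> x y)"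
  define C where "C = (\<lambda>x y. v x * u x * kF s \<epsilon> x y)"
  have kF_sym: "kF s \<epsilon> y x = kF s \<epsilon> x y" for x y
    unfolding kF_def frac_kernel_def by (simp add: dist_commute)
  have kFm'[measurable]: "(\<lambda>p. kF s \<epsilon> (snd p) (fst p)) \<in> borel_measurable (M \<Otimes>\<^sub>M M)"
  proof -
    have eq: "(\<lambda>p. kF s \<epsilon> (snd p) (fst p)) = (\<lambda>p. kF s \<epsilon> (fst p) (snd p))" using kF_sym by auto
    show ?thesis unfolding eq by (rule kFm)
  qed
  have kF_le: "kF s \<epsilon> x y \<le> frac_kernel s x y" for x y
    unfolding kF_def using frac_kernel_nonneg[of s x y] by simp
  have A0: "0 \<le> A x y" for x y unfolding A_def by (intro mult_nonneg_nonneg mono_uv kF_nonneg)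
  have B0: "0 \<le> B x y" for x y unfolding B_def up_def by (intro mult_nonneg_nonneg v0 kF_nonneg) simp
  have C0: "0 \<le> C x y" for x y unfolding C_def by (intro mult_nonneg_nonneg vu0 kF_nonneg)
  have Aw: "A (fst p) (snd p) \<le> w p" for p
    unfolding A_def w_def using mono_uv kF_le by (intro mult_left_mono) auto
  have key: "C x y + C y x \<le> A x y + B x y + B y x" for x y
  proof -
    have "A x y + B x y + B y x - C x y - C y x = kF s \<epsilon> x y * (v x * (up y - u y) + v y * (up x - u x))"
      unfolding A_def B_def C_def kF_sym[of x y] by (simp add: algebra_simps)
    also have "\<dots> \<ge> 0" using kF_nonneg v0 by (intro mult_nonneg_nonneg add_nonneg_nonneg) (auto simp: up_def)
    finally show ?thesis by simp
  qed
  have keyE: "ennreal (C x y) + ennreal (C y x) \<le> ennreal (A x y) + ennreal (B x y) + ennreal (B y x)" for x y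
  proof -
    have "ennreal (C x y) + ennreal (C y x) = ennreal (C x y + C y x)" using C0 by (simp add: ennreal_plus)
    also have "\<dots> \<le> ennreal (A x y + B x y + B y x)" using key by (rule ennreal_leI)
    also have "\<dots> = ennreal (A x y) + ennreal (B x y) + ennreal (B y x)" using A0 B0 by (simp add: ennreal_plus)
    finally show ?thesis .
  qed
  have Am[measurable]: "(\<lambda>p. ennreal (A (fst p) (snd p))) \<in> borel_measurable (M \<Otimes>\<^sub>M M)" unfolding A_def by measurable
  have Bm[measurable]: "(\<lambda>p. ennreal (B (fst p) (snd p))) \<in> borel_measurable (M \<Otimes>\<^sub>M M)" unfolding B_def by measurable
  have Cm[measurable]: "(\<lambda>p. ennreal (C (fst p) (snd p))) \<in> borel_measurable (M \<Otimes>\<^sub>M M)" unfolding C_def by measurable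
  have Bm'[measurable]: "(\<lambda>p. ennreal (B (snd p) (fst p))) \<in> borel_measurable (M \<Otimes>\<^sub>M M)" unfolding B_def by measurable
  have Cm'[measurable]: "(\<lambda>p. ennreal (C (snd p) (fst p))) \<in> borel_measurable (M \<Otimes>\<^sub>M M)" unfolding C_def by measurable
  have wm'[measurable]: "(\<lambda>p. ennreal (w p)) \<in> borel_measurable (M \<Otimes>\<^sub>M M)" by measurable
  let ?P = "M \<Otimes>\<^sub>M M"
  have IC: "(\<integral>\<^sup>+p. ennreal (C (fst p) (snd p)) \<partial>?P) + (\<integral>\<^sup>+p. ennreal (C (snd p) (fst p)) \<partial>?P)
      \<le> (\<integral>\<^sup>+p. ennreal (w p) \<partial>?P) + (\<integral>\<^sup>+p. ennreal (B (fst p) (snd p)) \<partial>?P) + (\<integral>\<^sup>+p. ennreal (B (snd p) (fst p)) \<partial>?P)"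
  proof -
    have "(\<integral>\<^sup>+p. ennreal (C (fst p) (snd p)) \<partial>?P) + (\<integral>\<^sup>+p. ennreal (C (snd p) (fst p)) \<partial>?P)
        = (\<integral>\<^sup>+p. ennreal (C (fst p) (snd p)) + ennreal (C (snd p) (fst p)) \<partial>?P)"
      by (rule nn_integral_add[symmetric]) measurable
    also have "\<dots> \<le> (\<integral>\<^sup>+p. ennreal (w p) + ennreal (B (fst p) (snd p)) + ennreal (B (snd p) (fst p)) \<partial>?P)"
    proof (intro nn_integral_mono)
      fix p
      have "ennreal (A (fst p) (snd p)) \<le> ennreal (w p)" using Aw by (rule ennreal_leI)
      then show "ennreal (C (fst p) (snd p)) + ennreal (C (snd p) (fst p)) \<le> ennreal (w p) + ennreal (B (fst p) (snd p)) + ennreal (B (snd p) (fst p))"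
        using keyE[of "fst p" "snd p"] by (meson add_right_mono order_trans)
    qed
    also have "\<dots> = (\<integral>\<^sup>+p. ennreal (w p) + ennreal (B (fst p) (snd p)) \<partial>?P) + (\<integral>\<^sup>+p. ennreal (B (snd p) (fst p)) \<partial>?P)"
      by (rule nn_integral_add) measurable
    also have "\<dots> = (\<integral>\<^sup>+p. ennreal (w p) \<partial>?P) + (\<integral>\<^sup>+p. ennreal (B (fst p) (snd p)) \<partial>?P) + (\<integral>\<^sup>+p. ennreal (B (snd p) (fst p)) \<partial>?P)"
      by (subst nn_integral_add) auto
    finally show ?thesis .
  qed
  have swC: "(\<integral>\<^sup>+p. ennreal (C (snd p) (fst p)) \<partial>?P) = (\<integral>\<^sup>+p. ennreal (C (fst p) (snd p)) \<partial>?P)"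
    using nn_swap[OF PM, of "\<lambda>x y. ennreal (C x y)"] Cm by simp
  have swB: "(\<integral>\<^sup>+p. ennreal (B (snd p) (fst p)) \<partial>?P) = (\<integral>\<^sup>+p. ennreal (B (fst p) (snd p)) \<partial>?P)"
    using nn_swap[OF PM, of "\<lambda>x y. ennreal (B x y)"] Bm by simp
  define VU where "VU = (\<integral>x. v x * u x \<partial>M)"
  define V1 where "V1 = (\<integral>x. v x \<partial>M)"
  define U1 where "U1 = (\<integral>x. up x \<partial>M)"
  define IW where "IW = integral\<^sup>L ?P w"
  have VU0: "0 \<le> VU" unfolding VU_def using vu0 by (intro integral_nonneg_AE) auto
  have V10: "0 \<le> V1" unfolding V1_def using v0 by (intro integral_nonneg_AE) auto
  have U10: "0 \<le> U1" unfolding U1_def by (intro integral_nonneg_AE) (auto simp: up_def)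
  have IW0: "0 \<le> IW" unfolding IW_def using w0 by (intro integral_nonneg_AE) auto
  have ennVU: "(\<integral>\<^sup>+x. ennreal (v x * u x) \<partial>M) = ennreal VU"
    unfolding VU_def using vuint vu0 by (intro nn_integral_eq_integral) auto
  have ennU1: "(\<integral>\<^sup>+x. ennreal (up x) \<partial>M) = ennreal U1"
    unfolding U1_def using upint by (intro nn_integral_eq_integral) (auto simp: up_def)
  have ennV1D: "(\<integral>\<^sup>+x. ennreal (v x * D) \<partial>M) = ennreal (V1 * D)"
  proof -
    have "(\<integral>\<^sup>+x. ennreal (v x * D) \<partial>M) = ennreal (\<integral>x. v x * D \<partial>M)"
      using vint v0 D0 by (intro nn_integral_eq_integral) auto
    then show ?thesis unfolding V1_def by simp
  qed
  have space_M: "space M = \<Omega>" unfolding M_def by simp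
  have ICl: "ennreal \<Lambda> * ennreal VU \<le> (\<integral>\<^sup>+p. ennreal (C (fst p) (snd p)) \<partial>?P)"
  proof -
    have "(\<integral>\<^sup>+p. ennreal (C (fst p) (snd p)) \<partial>?P) = (\<integral>\<^sup>+x. \<integral>\<^sup>+y. ennreal (C x y) \<partial>M \<partial>M)"
      using sigma_finite_measure.nn_integral_fst[OF sfM Cm] by simp
    also have "\<dots> \<ge> (\<integral>\<^sup>+x. ennreal (v x * u x) * ennreal \<Lambda> \<partial>M)"
    proof (intro nn_integral_mono)
      fix x assume x: "x \<in> space M"
      have "(\<integral>\<^sup>+y. ennreal (C x y) \<partial>M) = (\<integral>\<^sup>+y. ennreal (v x * u x) * ennreal (kF s \<epsilon> x y) \<partial>M)"
        unfolding C_def using vu0[of x] by (intro nn_integral_cong ennreal_mult) (auto intro: kF_nonneg)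
      also have "\<dots> = ennreal (v x * u x) * (\<integral>\<^sup>+y. ennreal (kF s \<epsilon> x y) \<partial>M)"
        by (rule nn_integral_cmult) measurable
      also have "\<dots> \<ge> ennreal (v x * u x) * ennreal \<Lambda>"
        using Hl x space_M unfolding M_def by (intro mult_left_mono) auto
      finally show "ennreal (v x * u x) * ennreal \<Lambda> \<le> (\<integral>\<^sup>+y. ennreal (C x y) \<partial>M)" .
    qed
    also have "(\<integral>\<^sup>+x. ennreal (v x * u x) * ennreal \<Lambda> \<partial>M) = ennreal \<Lambda> * ennreal VU"
      using ennVU by (subst nn_integral_multc) (auto simp: mult.commute)
    finally show ?thesis .
  qed
  have IBu: "(\<integral>\<^sup>+p. ennreal (B (fst p) (snd p)) \<partial>?P) \<le> ennreal (V1 * D) * ennreal U1"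
  proof -
    have "(\<integral>\<^sup>+p. ennreal (B (fst p) (snd p)) \<partial>?P) = (\<integral>\<^sup>+x. \<integral>\<^sup>+y. ennreal (B x y) \<partial>M \<partial>M)"
      using sigma_finite_measure.nn_integral_fst[OF sfM Bm] by simp
    also have "\<dots> \<le> (\<integral>\<^sup>+x. ennreal (v x * D) * ennreal U1 \<partial>M)"
    proof (intro nn_integral_mono)
      fix x
      have "(\<integral>\<^sup>+y. ennreal (B x y) \<partial>M) \<le> (\<integral>\<^sup>+y. ennreal (v x * D) * ennreal (up y) \<partial>M)"
      proof (intro nn_integral_mono)
        fix y
        have "B x y \<le> v x * up y * D"
          unfolding B_def using kF_upper[OF s e, of x y] v0[of x] by (intro mult_left_mono) (auto simp: up_def D_def)
        then have "ennreal (B x y) \<le> ennreal (v x * D * up y)" by (intro ennreal_leI) (simp add: algebra_simps)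
        also have "\<dots> = ennreal (v x * D) * ennreal (up y)"
          using v0[of x] D0 by (intro ennreal_mult) (auto simp: up_def)
        finally show "ennreal (B x y) \<le> ennreal (v x * D) * ennreal (up y)" .
      qed
      also have "\<dots> = ennreal (v x * D) * ennreal U1"
        using ennU1 by (subst nn_integral_cmult) auto
      finally show "(\<integral>\<^sup>+y. ennreal (B x y) \<partial>M) \<le> ennreal (v x * D) * ennreal U1" .
    qed
    also have "\<dots> = ennreal (V1 * D) * ennreal U1"
      using ennV1D by (subst nn_integral_multc) auto
    finally show ?thesis .
  qed
  have "2 * (ennreal \<Lambda> * ennreal VU) \<le> ennreal IW + 2 * (ennreal (V1 * D) * ennreal U1)"
  proof -
    have "2 * (ennreal \<Lambda> * ennreal VU) \<le> 2 * (\<integral>\<^sup>+p. ennreal (C (fst p) (snd p)) \<partial>?P)"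
      using ICl by (rule mult_left_mono) simp
    also have "\<dots> = (\<integral>\<^sup>+p. ennreal (C (fst p) (snd p)) \<partial>?P) + (\<integral>\<^sup>+p. ennreal (C (snd p) (fst p)) \<partial>?P)"
      unfolding swC by (simp add: mult_2)
    also have "\<dots> \<le> (\<integral>\<^sup>+p. ennreal (w p) \<partial>?P) + (\<integral>\<^sup>+p. ennreal (B (fst p) (snd p)) \<partial>?P) + (\<integral>\<^sup>+p. ennreal (B (snd p) (fst p)) \<partial>?P)"
      by (rule IC)
    also have "\<dots> = ennreal IW + 2 * (\<integral>\<^sup>+p. ennreal (B (fst p) (snd p)) \<partial>?P)"
      unfolding swB w_nn IW_def by (simp add: mult_2 add.assoc)
    also have "\<dots> \<le> ennreal IW + 2 * (ennreal (V1 * D) * ennreal U1)"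
      using IBu by (intro add_left_mono mult_left_mono) auto
    finally show ?thesis .
  qed
  then have ie: "2 * ennreal (\<Lambda> * VU) \<le> ennreal IW + 2 * ennreal (V1 * D * U1)"
    using \<Lambda> VU0 V10 U10 D0 by (simp add: ennreal_mult[symmetric])
  have t: "2 * ennreal x = ennreal (2 * x)" if "0 \<le> x" for x using ennreal_mult[of 2 x] that by simp
  have "ennreal (2 * (\<Lambda> * VU)) \<le> ennreal (IW + 2 * (V1 * D * U1))"
    using ie unfolding t[OF mult_nonneg_nonneg[OF \<Lambda> VU0]] t[OF mult_nonneg_nonneg[OF mult_nonneg_nonneg[OF V10 D0] U10]]
    using IW0 V10 D0 U10 by (simp add: ennreal_plus)
  then have "2 * (\<Lambda> * VU) \<le> IW + 2 * (V1 * D * U1)"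
    using IW0 V10 D0 U10 by (subst (asm) ennreal_le_iff) auto
  moreover have "Es s \<Omega> u v = IW / 2" using Es_eq unfolding IW_def by simp
  ultimately show ?thesis
    unfolding VU_def V1_def U1_def D_def M_def up_def by (simp add: algebra_simps)
qed



lemma trunc_Hs:
  fixes u :: "'a::euclidean_space \<Rightarrow> real"
  assumes u: "u \<in> Hs s \<Omega>" and K: "0 \<le> K"
  shows "(\<lambda>x. max (u x - K) 0) \<in> Hs s \<Omega>"
proof -
  define v where "v = (\<lambda>x. max (u x - K) 0)"
  have um[measurable]: "u \<in> borel_measurable (lebesgue_on \<Omega>)" using u unfolding Hs_def by blast
  have u2: "integrable (lebesgue_on \<Omega>) (\<lambda>x. (u x)\<^sup>2)" using u unfolding Hs_def by blast
  have uH: "(\<integral>\<^sup>+ x. \<integral>\<^sup>+ y. ennreal ((u x - u y)\<^sup>2 * frac_kernel s x y) \<partial>lebesgue_on \<Omega> \<partial>lebesgue_on \<Omega>) < \<infinity>"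
    using u unfolding Hs_def by blast
  have vm: "v \<in> borel_measurable (lebesgue_on \<Omega>)" unfolding v_def by measurable
  have vsq: "(v x)\<^sup>2 \<le> (u x)\<^sup>2" for x
  proof -
    have "\<bar>v x\<bar> \<le> \<bar>u x\<bar>" unfolding v_def using K by (auto simp: max_def)
    then have "\<bar>v x\<bar>\<^sup>2 \<le> \<bar>u x\<bar>\<^sup>2" by (intro power_mono) auto
    then show ?thesis by simp
  qed
  have v2: "integrable (lebesgue_on \<Omega>) (\<lambda>x. (v x)\<^sup>2)"
    by (rule Bochner_Integration.integrable_bound[OF u2]) (use vm vsq in \<open>auto intro!: AE_I2\<close>)
  have dsq: "(v x - v y)\<^sup>2 * frac_kernel s x y \<le> (u x - u y)\<^sup>2 * frac_kernel s x y" for x y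
  proof -
    have "\<bar>v x - v y\<bar> \<le> \<bar>u x - u y\<bar>" unfolding v_def by (auto simp: max_def)
    then have "\<bar>v x - v y\<bar>\<^sup>2 \<le> \<bar>u x - u y\<bar>\<^sup>2" by (intro power_mono) auto
    then show ?thesis by (intro mult_right_mono frac_kernel_nonneg) simp
  qed
  have "(\<integral>\<^sup>+ x. \<integral>\<^sup>+ y. ennreal ((v x - v y)\<^sup>2 * frac_kernel s x y) \<partial>lebesgue_on \<Omega> \<partial>lebesgue_on \<Omega>)
     \<le> (\<integral>\<^sup>+ x. \<integral>\<^sup>+ y. ennreal ((u x - u y)\<^sup>2 * frac_kernel s x y) \<partial>lebesgue_on \<Omega> \<partial>lebesgue_on \<Omega>)"
    by (intro nn_integral_mono ennreal_leI dsq)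
  then have "(\<integral>\<^sup>+ x. \<integral>\<^sup>+ y. ennreal ((v x - v y)\<^sup>2 * frac_kernel s x y) \<partial>lebesgue_on \<Omega> \<partial>lebesgue_on \<Omega>) < \<infinity>"
    using uH by (rule le_less_trans)
  then show ?thesis using vm v2 unfolding Hs_def v_def by blast
qed

lemma Linf_AE:
  assumes "Linf \<Omega> V"
  shows "AE x in lebesgue_on \<Omega>. \<bar>V x\<bar> \<le> Linf_norm \<Omega> V"
proof -
  let ?E = "esssup (lebesgue_on \<Omega>) (\<lambda>x. ereal \<bar>V x\<bar>)"
  have fin: "?E < \<infinity>" using assms unfolding Linf_def by blast
  have "AE x in lebesgue_on \<Omega>. ereal \<bar>V x\<bar> \<le> ?E" by (rule esssup_AE)
  then show ?thesis
  proof eventually_elim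
    case (elim x)
    show ?case using elim fin unfolding Linf_norm_def by (cases ?E) auto
  qed
qed

theorem theorem4p1:
  fixes \<Omega> :: "'a::euclidean_space set"
  assumes "lipschitz_set \<Omega>"
  shows "\<exists>c0 :: real \<Rightarrow> real \<Rightarrow> real \<Rightarrow> real. (\<forall>a b c. 0 < c0 a b c) \<and>
     (\<forall>s V f u. 0 \<le> s \<and> s < 1 \<and> Linf \<Omega> V \<and> Linf \<Omega> f \<and> weak_subsolution s \<Omega> V f u \<longrightarrow>
        (AE x in lebesgue_on \<Omega>.
           u x \<le> c0 (Linf_norm \<Omega> V) (Linf_norm \<Omega> f) (L2_norm_on \<Omega> (\<lambda>y. max (u y) 0))))"
proof -
  have op: "open \<Omega>" and bd: "bounded \<Omega>" using assms unfolding lipschitz_set_def by auto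
  obtain r0 c where r0: "0 < r0" "r0 \<le> 1" and c: "0 < c" "c \<le> 1/4" and geo:
    "\<forall>x\<in>\<Omega>. \<forall>r. 0 < r \<and> r \<le> r0 \<longrightarrow>
     (\<exists>z. ball z (c*r) \<subseteq> \<Omega> \<and> (\<forall>y\<in>ball z (c*r). r/4 < dist x y \<and> dist x y < r))"
    using geom[OF assms] by blast
  define \<beta> where "\<beta> = unit_ball_vol DIM('a) * c ^ DIM('a)"
  have \<beta>0: "\<beta> > 0" unfolding \<beta>_def using c by simp
  define J where "J a = nat \<lceil>(max a 0 + 1) / \<beta>\<rceil>" for a :: real
  define \<epsilon> where "\<epsilon> a = r0 * (1/4::real) ^ (J a)" for a
  define Dc where "Dc a = 1 / (\<epsilon> a) ^ (DIM('a) + 2)" for a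
  define Om where "Om = measure (lebesgue_on \<Omega>) \<Omega>"
  define c0 where "c0 a b cc = max b 0 + Dc a * ((Om + cc\<^sup>2) / 2) + 1" for a b cc
  have \<epsilon>0: "0 < \<epsilon> a" for a unfolding \<epsilon>_def using r0 by simp
  have \<epsilon>1: "\<epsilon> a \<le> 1" for a
  proof -
    have "\<epsilon> a \<le> r0 * 1" unfolding \<epsilon>_def using r0 by (intro mult_left_mono) (auto simp: power_le_one)
    then show ?thesis using r0 by simp
  qed
  have Dc0: "0 \<le> Dc a" for a unfolding Dc_def using \<epsilon>0[of a] by simp
  have Om0: "0 \<le> Om" unfolding Om_def by simp
  have c0pos: "1 \<le> c0 a b cc" for a b cc
    unfolding c0_def using Dc0[of a] Om0 by (simp add: add_nonneg_nonneg)
  have Jbig: "max a 0 + 1 \<le> real (J a) * \<beta>" for a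
  proof -
    have "(max a 0 + 1) / \<beta> \<le> real (J a)" unfolding J_def by linarith
    then show ?thesis using \<beta>0 by (simp add: field_simps)
  qed
  have main: "AE x in lebesgue_on \<Omega>. u x \<le> c0 (Linf_norm \<Omega> V) (Linf_norm \<Omega> f) (L2_norm_on \<Omega> (\<lambda>y. max (u y) 0))"
    if s: "0 \<le> s" "s < 1" and LV: "Linf \<Omega> V" and Lf: "Linf \<Omega> f" and sub: "weak_subsolution s \<Omega> V f u"
    for s V f u
  proof -
    define M where "M = lebesgue_on \<Omega>"
    define Mv where "Mv = Linf_norm \<Omega> V"
    define Fv where "Fv = Linf_norm \<Omega> f"
    define cc where "cc = L2_norm_on \<Omega> (\<lambda>y. max (u y) 0)"
    define K where "K = c0 Mv Fv cc"
    define v where "v = (\<lambda>x. max (u x - K) 0)"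
    define up where "up = (\<lambda>x. max (u x) 0)"
    define \<Lambda> where "\<Lambda> = real (J Mv) * \<beta>"
    define D where "D = Dc Mv"
    have K1: "1 \<le> K" unfolding K_def by (rule c0pos)
    have \<Lambda>ge: "max Mv 0 + 1 \<le> \<Lambda>" unfolding \<Lambda>_def by (rule Jbig)
    have \<Lambda>0: "0 \<le> \<Lambda>" using \<Lambda>ge by simp
    have u: "u \<in> Hs s \<Omega>" using sub unfolding weak_subsolution_def by blast
    have \<Omega>l: "\<Omega> \<in> lmeasurable" using op bd by (simp add: bounded_set_imp_lmeasurable)
    interpret M: finite_measure M unfolding M_def using finite_measure_lebesgue_on[OF \<Omega>l] .
    have space_M: "space M = \<Omega>" unfolding M_def by simp
    have um[measurable]: "u \<in> borel_measurable M" using u unfolding Hs_def M_def by blast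
    have u2: "integrable M (\<lambda>x. (u x)\<^sup>2)" using u unfolding Hs_def M_def by blast
    have vm[measurable]: "v \<in> borel_measurable M" unfolding v_def by measurable
    have v0: "v x \<ge> 0" for x unfolding v_def by simp
    have vu0: "0 \<le> v x * u x" for x unfolding v_def using K1 by (simp add: max_def)
    have vuK: "K * v x \<le> v x * u x" for x unfolding v_def using K1 by (simp add: max_def mult.commute mult_right_mono)
    have Hl: "\<forall>x\<in>\<Omega>. ennreal \<Lambda> \<le> (\<integral>\<^sup>+ y. ennreal (kF s (\<epsilon> Mv) x y) \<partial>lebesgue_on \<Omega>)"
      using far_lower[OF geo r0 c(1) s(1) _ op, of _ "J Mv"] unfolding \<Lambda>_def \<beta>_def \<epsilon>_def by blast
    have MB: "\<Lambda> * (\<integral>x. v x * u x \<partial>M) - D * (\<integral>x. up x \<partial>M) * (\<integral>x. v x \<partial>M) \<le> Es s \<Omega> u v"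
      using main_bound[OF op bd s \<epsilon>0 \<epsilon>1 Hl \<Lambda>0 u _ v_def] K1 unfolding M_def up_def D_def Dc_def by simp
    have vH: "v \<in> Hs s \<Omega>" unfolding v_def using trunc_Hs[OF u, of K] K1 by simp
    have subI: "Es s \<Omega> u v + (\<integral>x. V x * u x * v x \<partial>M) \<le> (\<integral>x. f x * v x \<partial>M)"
      using sub vH v0 unfolding weak_subsolution_def M_def by blast
    define Mp where "Mp = max Mv 0"
    define Fp where "Fp = max Fv 0"
    define X where "X = (Om + cc\<^sup>2) / 2"
    define VU where "VU = (\<integral>x. v x * u x \<partial>M)"
    define V1 where "V1 = (\<integral>x. v x \<partial>M)"
    define U1 where "U1 = (\<integral>x. up x \<partial>M)"
    have upm[measurable]: "up \<in> borel_measurable M" unfolding up_def by measurable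
    have up2: "(up x)\<^sup>2 \<le> (u x)\<^sup>2" for x
    proof -
      have "\<bar>up x\<bar> \<le> \<bar>u x\<bar>" unfolding up_def by (auto simp: max_def)
      then have "\<bar>up x\<bar>\<^sup>2 \<le> \<bar>u x\<bar>\<^sup>2" by (intro power_mono) auto
      then show ?thesis by simp
    qed
    have up2int: "integrable M (\<lambda>x. (up x)\<^sup>2)"
      by (rule Bochner_Integration.integrable_bound[OF u2]) (use up2 in \<open>auto intro!: AE_I2\<close>)
    have int1: "integrable M (\<lambda>x. 1::real)" by simp
    have upbd: "up x \<le> (1 + (up x)\<^sup>2) / 2" for x
    proof -
      have "0 \<le> (up x - 1)\<^sup>2" by simp
      moreover have "(up x - 1)\<^sup>2 = (up x)\<^sup>2 - 2 * up x + 1" by (simp add: power2_eq_square algebra_simps)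
      ultimately show ?thesis by simp
    qed
    have int1up: "integrable M (\<lambda>x. (1 + (up x)\<^sup>2) / 2)"
      using Bochner_Integration.integrable_add[OF int1 up2int] by simp
    have upint: "integrable M up"
      by (rule Bochner_Integration.integrable_bound[OF int1up]) (use upbd in \<open>auto intro!: AE_I2 simp: up_def\<close>)
    have vup: "v x \<le> up x" for x unfolding v_def up_def using K1 by simp
    have vint: "integrable M v"
      by (rule Bochner_Integration.integrable_bound[OF upint]) (use v0 vup in \<open>auto simp: up_def intro!: AE_I2\<close>)
    have vuu: "v x * u x \<le> (u x)\<^sup>2" for x unfolding v_def using K1 by (simp add: max_def power2_eq_square mult_right_mono)
    have vuint: "integrable M (\<lambda>x. v x * u x)"
      by (rule Bochner_Integration.integrable_bound[OF u2]) (use vu0 vuu in \<open>auto intro!: AE_I2\<close>)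
    have VU0: "0 \<le> VU" unfolding VU_def using vu0 by (intro integral_nonneg_AE) auto
    have V10: "0 \<le> V1" unfolding V1_def using v0 by (intro integral_nonneg_AE) auto
    have U10: "0 \<le> U1" unfolding U1_def by (intro integral_nonneg_AE) (auto simp: up_def)
    have D0: "0 \<le> D" unfolding D_def by (rule Dc0)
    have X0: "0 \<le> X" unfolding X_def using Om0 by simp
    have VAE: "AE x in M. \<bar>V x\<bar> \<le> Mp"
      unfolding M_def Mv_def Mp_def using Linf_AE[OF LV] by eventually_elim auto
    have f3: "- (Mp * VU) \<le> (\<integral>x. V x * u x * v x \<partial>M)"
    proof (cases "integrable M (\<lambda>x. V x * u x * v x)")
      case True
      have "(\<integral>x. - Mp * (v x * u x) \<partial>M) \<le> (\<integral>x. V x * u x * v x \<partial>M)"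
      proof (rule integral_mono_AE)
        show "integrable M (\<lambda>x. - Mp * (v x * u x))" using vuint by simp
        show "integrable M (\<lambda>x. V x * u x * v x)" by (rule True)
        show "AE x in M. - Mp * (v x * u x) \<le> V x * u x * v x"
          using VAE
        proof eventually_elim
          case (elim x)
          have "- Mp * (v x * u x) \<le> - \<bar>V x\<bar> * (v x * u x)"
            using elim vu0[of x] by (intro mult_right_mono) auto
          also have "\<dots> \<le> V x * (v x * u x)" using vu0[of x] by (intro mult_right_mono) auto
          finally show ?case by (simp add: algebra_simps)
        qed
      qed
      then show ?thesis unfolding VU_def by simp
    next
      case False
      then have "(\<integral>x. V x * u x * v x \<partial>M) = 0" by (rule not_integrable_integral_eq)
      moreover have "0 \<le> Mp * VU" unfolding Mp_def using VU0 by simp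
      ultimately show ?thesis by simp
    qed
    have FAE: "AE x in M. \<bar>f x\<bar> \<le> Fp"
      unfolding M_def Fv_def Fp_def using Linf_AE[OF Lf] by eventually_elim auto
    have f4: "(\<integral>x. f x * v x \<partial>M) \<le> Fp * V1"
    proof (cases "integrable M (\<lambda>x. f x * v x)")
      case True
      have "(\<integral>x. f x * v x \<partial>M) \<le> (\<integral>x. Fp * v x \<partial>M)"
      proof (rule integral_mono_AE)
        show "integrable M (\<lambda>x. Fp * v x)" using vint by simp
        show "integrable M (\<lambda>x. f x * v x)" by (rule True)
        show "AE x in M. f x * v x \<le> Fp * v x"
          using FAE
        proof eventually_elim
          case (elim x)
          have "f x * v x \<le> \<bar>f x\<bar> * v x" using v0[of x] by (intro mult_right_mono) auto
          also have "\<dots> \<le> Fp * v x" using elim v0[of x] by (intro mult_right_mono) auto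
          finally show ?case .
        qed
      qed
      then show ?thesis unfolding V1_def by simp
    next
      case False
      then have "(\<integral>x. f x * v x \<partial>M) = 0" by (rule not_integrable_integral_eq)
      moreover have "0 \<le> Fp * V1" unfolding Fp_def using V10 by simp
      ultimately show ?thesis by simp
    qed
    have cc2: "cc\<^sup>2 = (\<integral>x. (up x)\<^sup>2 \<partial>M)"
    proof -
      have "0 \<le> (\<integral>x. (up x)\<^sup>2 \<partial>M)" by (intro integral_nonneg_AE) auto
      then show ?thesis unfolding cc_def L2_norm_on_def M_def up_def by simp
    qed
    have U1X: "U1 \<le> X"
    proof -
      have "U1 \<le> (\<integral>x. (1 + (up x)\<^sup>2) / 2 \<partial>M)"
        unfolding U1_def using upint int1up upbd by (intro integral_mono) auto
      also have "\<dots> = ((\<integral>x. 1 \<partial>M) + (\<integral>x. (up x)\<^sup>2 \<partial>M)) / 2"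
        using Bochner_Integration.integral_add[OF int1 up2int] by simp
      also have "(\<integral>x. 1 \<partial>M) = Om" unfolding Om_def M_def by simp
      finally show ?thesis unfolding X_def cc2 .
    qed
    have f1: "\<Lambda> * VU - D * U1 * V1 \<le> Es s \<Omega> u v" using MB unfolding VU_def U1_def V1_def .
    have f5: "VU + Mp * VU \<le> \<Lambda> * VU"
    proof -
      have "(1 + Mp) * VU \<le> \<Lambda> * VU" using \<Lambda>ge VU0 unfolding Mp_def by (intro mult_right_mono) auto
      then show ?thesis by (simp add: algebra_simps)
    qed
    have f6: "D * U1 * V1 \<le> D * X * V1"
      using U1X D0 V10 by (intro mult_right_mono mult_left_mono) auto
    have f7: "K * V1 \<le> VU"
    proof -
      have "(\<integral>x. K * v x \<partial>M) \<le> VU" unfolding VU_def using vint vuint vuK by (intro integral_mono) auto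
      then show ?thesis unfolding V1_def by simp
    qed
    have f8: "K * V1 = Fp * V1 + D * X * V1 + V1"
      unfolding K_def c0_def Fp_def D_def X_def by (simp add: algebra_simps)
    have "V1 \<le> 0" using f1 subI f3 f4 f5 f6 f7 f8 by linarith
    then have "V1 = 0" using V10 by simp
    then have "AE x in M. v x = 0"
      using integral_nonneg_eq_0_iff_AE[OF vint] v0 unfolding V1_def by simp
    then have "AE x in M. u x \<le> K"
      by (rule AE_mp) (auto simp: v_def max_def split: if_splits intro!: AE_I2)
    then show ?thesis unfolding M_def K_def Mv_def Fv_def cc_def .
  qed
  show ?thesis
    by (rule exI[of _ c0]) (use c0pos main in \<open>auto intro: less_le_trans[OF zero_less_one]\<close>)
qed

end
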